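(* Let $0<\delta<1$ and let $(f_n)_{n\ge1}$ be a sequence of Möbius transformations such that $f_n(\mathbb{D})\subset\mathbb{D}$ and $\operatorname{rad}(f_n(\mathbb{D}))<\delta$ for all $n$. Then $F_n=f_1\cdots f_n$ is a rapid-escape sequence.
   Context: $\mathbb{D}$ is the open unit disc; $\operatorname{rad}(D)$ is the Euclidean radius of a Euclidean disc $D$. $\mathbb{H}^3=\{(x,y,t)\in\mathbb{R}^3:t>0\}$ with the hyperbolic metric $\rho$ induced by the density $ds/t$; $\mathbb{C}$ is identified with the plane $t=0$, so $\overline{\mathbb{C}}$ is the ideal boundary, and Möbius transformations act on $\mathbb{H}^3$ by their Poincaré extensions (as hyperbolic isometries). Let $j=(0,0,1)$. A sequence of Möbius transformations $(F_n)$ is escaping if $\rho(j,F_n(j))\to\infty$, and is a rapid-escape sequence if it is escaping and $\sum_n\exp(-\rho(j,F_n(j)))<+\infty$. *)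

theory Defs
  imports "HOL-Analysis.Analysis"
begin

text \<open>A Moebius transformation is represented by a nonsingular complex 2x2 matrix
  A = (a b; c d), acting by z \<mapsto> (a z + b)/(c z + d). Composition corresponds to
  the matrix product.\<close>

type_synonym mob = "complex^2^2"

definition is_mobius :: "mob \<Rightarrow> bool" where
  "is_mobius A \<longleftrightarrow> det A \<noteq> 0"

definition mob_app :: "mob \<Rightarrow> complex \<Rightarrow> complex" where
  "mob_app A z = (A$1$1 * z + A$1$2) / (A$2$1 * z + A$2$2)"

definition maps_disc_into_disc :: "mob \<Rightarrow> bool" where
  "maps_disc_into_disc A \<longleftrightarrow>
     (\<forall>z\<in>ball (0::complex) 1. A$2$1 * z + A$2$2 \<noteq> 0 \<and> mob_app A z \<in> ball 0 1)"

definition disc_rad :: "complex set \<Rightarrow> real" where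
  "disc_rad S = (THE r. \<exists>c. S = ball c r)"

text \<open>Upper half-space model H^3: points (z,t) with z complex, t > 0.
  Hyperbolic distance for the metric ds/t.\<close>
definition hyp_dist :: "complex \<times> real \<Rightarrow> complex \<times> real \<Rightarrow> real" where
  "hyp_dist p q = arcosh (1 + ((cmod (fst p - fst q))\<^sup>2 + (snd p - snd q)\<^sup>2)
                                 / (2 * snd p * snd q))"

text \<open>Poincare extension of the Moebius map A to H^3 (quaternion formula
  (aq+b)(cq+d)^{-1}, normalised for arbitrary nonzero determinant).\<close>
definition poincare_ext :: "mob \<Rightarrow> complex \<times> real \<Rightarrow> complex \<times> real" where
  "poincare_ext A p =
     (let z = fst p; t = snd p; a = A$1$1; b = A$1$2; c = A$2$1; d = A$2$2;
          D = (cmod (c * z + d))\<^sup>2 + (cmod c)\<^sup>2 * t\<^sup>2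
      in (((a * z + b) * cnj (c * z + d) + a * cnj c * complex_of_real (t\<^sup>2)) / complex_of_real D,
          t * cmod (det A) / D))"

definition jpt :: "complex \<times> real" where "jpt = (0, 1)"

definition escaping :: "(nat \<Rightarrow> mob) \<Rightarrow> bool" where
  "escaping F \<longleftrightarrow> filterlim (\<lambda>n. hyp_dist jpt (poincare_ext (F n) jpt)) at_top sequentially"

definition rapid_escape :: "(nat \<Rightarrow> mob) \<Rightarrow> bool" where
  "rapid_escape F \<longleftrightarrow> escaping F \<and>
     summable (\<lambda>n. exp (- hyp_dist jpt (poincare_ext (F n) jpt)))"

fun comp_prod :: "(nat \<Rightarrow> mob) \<Rightarrow> nat \<Rightarrow> mob" where
  "comp_prod f 0 = mat 1"
| "comp_prod f (Suc n) = comp_prod f n ** f (Suc n)"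

end

theory Submission
  imports Defs
begin


lemma normsq_id: "cmod (c*z+d)^2 - cmod (cnj d * z + cnj c)^2 = (cmod d^2 - cmod c^2) * (1 - cmod z^2)"
proof -
  have "complex_of_real (cmod (c*z+d)^2 - cmod (cnj d * z + cnj c)^2) = complex_of_real ((cmod d^2 - cmod c^2) * (1 - cmod z^2))"
    by (simp only: of_real_diff of_real_mult of_real_1 complex_norm_square complex_cnj_add complex_cnj_mult complex_cnj_cnj) (simp add: algebra_simps)
  then show ?thesis using of_real_eq_iff by blast
qed

lemma sub_id:
  fixes a b c d z :: complex and q :: real
  assumes "q = cmod d^2 - cmod c^2" "q \<noteq> 0" "c*z+d \<noteq> 0"
  shows "(a*z+b)/(c*z+d) - (b*cnj d - a*cnj c)/of_real q = (a*d-b*c)*(cnj d*z + cnj c)/(of_real q*(c*z+d))"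
proof -
  have qc: "complex_of_real q = d * cnj d - c * cnj c"
    using assms(1) by (simp add: complex_norm_square[symmetric])
  have "complex_of_real q \<noteq> 0" using assms(2) by simp
  then show ?thesis using assms(3) unfolding qc
    by (simp add: field_simps)
qed

lemma mob_image_ball:
  fixes a b c d :: complex
  assumes det: "a*d-b*c \<noteq> 0" and cd: "cmod c < cmod d"
  shows "(\<lambda>z. (a*z+b)/(c*z+d)) ` ball 0 1 =
     ball ((b*cnj d - a*cnj c)/of_real (cmod d^2 - cmod c^2)) (cmod(a*d-b*c)/(cmod d^2 - cmod c^2))"
    (is "?f ` _ = ball ?cf ?r")
proof -
  define q where "q = cmod d^2 - cmod c^2"
  have q0: "q > 0" unfolding q_def using cd
    by (simp add: power_strict_mono)
  have key: "cmod (?f z - ?cf) = ?r * (cmod (cnj d*z + cnj c) / cmod (c*z+d))" if "c*z+d \<noteq> 0" for z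
  proof -
    have "?f z - ?cf = (a*d-b*c)*(cnj d*z + cnj c)/(of_real q*(c*z+d))"
    proof -
      have qne: "q \<noteq> 0" using q0 by simp
      show ?thesis using sub_id[OF q_def qne that, of a b] unfolding q_def .
    qed
    then show ?thesis using q0 unfolding q_def[symmetric]
      by (simp add: norm_mult norm_divide)
  qed
  have r0: "?r > 0" using q0 det unfolding q_def by simp
  show ?thesis
  proof (intro set_eqI iffI)
    fix w assume "w \<in> ?f ` ball 0 1"
    then obtain z where z: "cmod z < 1" "w = ?f z" by auto
    have "cmod (c*z) = cmod c * cmod z" by (simp add: norm_mult)
    also have "\<dots> \<le> cmod c" using z(1) by (simp add: mult_left_le)
    finally have czl: "cmod (c*z) < cmod d" using cd by linarith
    have nz: "c*z+d \<noteq> 0"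
    proof
      assume "c*z+d = 0"
      hence "d = - (c*z)" by (simp add: add_eq_0_iff)
      thus False using czl by simp
    qed
    have "cmod z^2 < 1^2" using z(1) by (intro power_strict_mono) auto
    hence "q*(1-cmod z^2) > 0" using q0 by simp
    hence "cmod (cnj d*z + cnj c)^2 < cmod (c*z+d)^2"
      using normsq_id[of c z d] unfolding q_def by linarith
    hence "cmod (cnj d*z + cnj c) < cmod (c*z+d)"
      using power_less_imp_less_base norm_ge_zero by blast
    hence "cmod (cnj d*z + cnj c) / cmod (c*z+d) < 1" using nz by simp
    hence "cmod (?f z - ?cf) < ?r" using key[OF nz] r0
      by (metis mult.right_neutral mult_strict_left_mono)
    then show "w \<in> ball ?cf ?r" using z by (simp add: dist_norm norm_minus_commute)
  next
    fix w assume w: "w \<in> ball ?cf ?r"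
    hence wl: "cmod (w - ?cf) < ?r" by (simp add: dist_norm norm_minus_commute)
    have acw: "a - c*w \<noteq> 0"
    proof
      assume h: "a - c*w = 0"
      show False
      proof (cases "c = 0")
        case True then show False using h det by simp
      next
        case False
        have wa: "w = a/c" using h False by (simp add: field_simps)
        have "w - ?cf = (a*d-b*c)*cnj d/(of_real q*c)"
        proof -
          have qc: "complex_of_real q = d * cnj d - c * cnj c"
            unfolding q_def by (simp add: complex_norm_square[symmetric])
          have "complex_of_real q \<noteq> 0" using q0 by simp
          then show ?thesis unfolding wa q_def[symmetric] using False unfolding qc
            by (simp add: field_simps)
        qed
        hence e1: "cmod (w - ?cf) = ?r * (cmod d / cmod c)" using q0 unfolding q_def[symmetric]
          by (simp add: norm_mult norm_divide)
        have g1: "cmod d / cmod c > 1" using False cd by simp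
        have "?r < ?r * (cmod d / cmod c)" using r0 g1
          by (metis mult.right_neutral mult_strict_left_mono)
        hence "cmod (w - ?cf) > ?r" using e1 by linarith
        then show False using wl by simp
      qed
    qed
    define z where "z = (d*w - b)/(a - c*w)"
    have czd: "c*z+d = (a*d-b*c)/(a-c*w)" unfolding z_def using acw by (simp add: field_simps)
    hence nz: "c*z+d \<noteq> 0" using det acw by simp
    have "a*z+b = w*((a*d-b*c)/(a-c*w))" unfolding z_def using acw by (simp add: field_simps)
    hence fz: "?f z = w" using nz czd by simp
    have "cmod z < 1"
    proof (rule ccontr)
      assume "\<not> cmod z < 1"
      hence "1^2 \<le> cmod z^2" by (intro power_mono) auto
      hence "q*(1-cmod z^2) \<le> 0" using q0 by (simp add: mult_nonneg_nonpos)
      hence "cmod (c*z+d)^2 \<le> cmod (cnj d*z + cnj c)^2"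
        using normsq_id[of c z d] unfolding q_def by linarith
      hence "cmod (c*z+d) \<le> cmod (cnj d*z + cnj c)"
        using power2_le_imp_le norm_ge_zero by blast
      hence "cmod (cnj d*z + cnj c) / cmod (c*z+d) \<ge> 1" using nz by simp
      hence "cmod (?f z - ?cf) \<ge> ?r" using key[OF nz] r0
        by (metis mult.right_neutral mult_left_mono less_imp_le)
      then show False using wl fz by simp
    qed
    then show "w \<in> ?f ` ball 0 1" using fz by force
  qed
qed


lemma disc_pole_outside:
  fixes a b c d :: complex
  assumes det: "a*d-b*c \<noteq> 0"
    and H: "\<And>z. cmod z < 1 \<Longrightarrow> c*z+d \<noteq> 0 \<and> cmod ((a*z+b)/(c*z+d)) < 1"
  shows "cmod c < cmod d"
proof (rule ccontr)
  assume "\<not> cmod c < cmod d"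
  hence dc: "cmod d \<le> cmod c" by simp
  have c0: "c \<noteq> 0" using dc det by auto
  define p where "p = - d / c"
  have cp: "c*p + d = 0" unfolding p_def using c0 by (simp add: field_simps)
  have pl: "cmod p \<le> 1" unfolding p_def using dc c0 by (simp add: norm_divide divide_le_eq_1)
  show False
  proof (cases "cmod p < 1")
    case True then show False using H[OF True] cp by simp
  next
    case False
    hence p1: "cmod p = 1" using pl by simp
    hence d0: "cmod d = cmod c" unfolding p_def using c0 by (simp add: norm_divide)
    define K where "K = cmod (a*d-b*c) / cmod c"
    have K0: "K > 0" unfolding K_def using det c0 by simp
    define e where "e = min (1/2) (K / (cmod a + cmod d + 1))"
    have "cmod a + cmod d + 1 > 0" using norm_ge_zero[of a] norm_ge_zero[of d] by linarith
    hence e0: "e > 0" unfolding e_def using K0 by simp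
    have e1: "e \<le> 1/2" unfolding e_def by (rule min.cobounded1)
    have eK: "e * (cmod a + cmod d) \<le> K"
    proof -
      have "e \<le> K / (cmod a + cmod d + 1)" unfolding e_def by (rule min.cobounded2)
      moreover have "cmod a + cmod d + 1 > 0" using norm_ge_zero[of a] norm_ge_zero[of d] by linarith
      ultimately have "e * (cmod a + cmod d + 1) \<le> K" by (simp add: pos_le_divide_eq)
      thus ?thesis using e0 by (simp add: algebra_simps)
    qed
    define z where "z = complex_of_real (1 - e) * p"
    have "cmod z = abs (1 - e)" unfolding z_def using p1 by (simp only: norm_mult norm_of_real) simp
    hence zl: "cmod z < 1" using e0 e1 by simp
    have cpd: "c*p = -d" using cp by (simp add: add_eq_0_iff)
    have "c*z = complex_of_real (1 - e) * (c*p)" unfolding z_def by (simp add: algebra_simps)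
    hence czd: "c*z+d = e*d" unfolding cpd by (simp add: algebra_simps)
    have apb: "a*p+b = - (a*d-b*c)/c" unfolding p_def using c0 by (simp add: field_simps)
    have "a*z+b = (a*p+b) - e*(a*p)" unfolding z_def by (simp add: algebra_simps)
    hence azb: "a*z+b = - (a*d-b*c)/c - e*(a*p)" unfolding apb .
    have "cmod (a*z+b) \<ge> K - e * cmod a"
    proof -
      have "cmod (- (a*d-b*c)/c) \<le> cmod (a*z+b) + cmod (e*(a*p))"
        unfolding azb by (metis diff_add_cancel norm_triangle_ineq)
      moreover have "cmod (- (a*d-b*c)/c) = K" unfolding K_def by (simp only: norm_divide norm_minus_cancel)
      moreover have "cmod (e*(a*p)) = e * cmod a" using p1 e0 by (simp add: norm_mult)
      ultimately show ?thesis by linarith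
    qed
    hence "cmod (a*z+b) \<ge> e * cmod d" using eK by (simp add: algebra_simps)
    moreover have "cmod (c*z+d) = e * cmod d" unfolding czd using e0 by (simp add: norm_mult)
    moreover have "c*z+d \<noteq> 0" using H[OF zl] by simp
    ultimately have "cmod ((a*z+b)/(c*z+d)) \<ge> 1" using e0 by (auto simp add: norm_divide le_divide_eq) (smt (verit) mult_pos_pos norm_ge_zero zero_less_norm_iff)
    then show False using H[OF zl] by simp
  qed
qed


lemma step_real:
  fixes x y m r \<delta> W :: real
  assumes x0: "0 \<le> x" and xy: "x < y" and W: "W \<ge> y - x*m" and m0: "0 \<le> m"
    and mr: "m + r \<le> 1" and r0: "0 < r" and rd: "r < \<delta>" and d1: "\<delta> < 1"
  shows "W^2 - r^2*x^2 \<ge> (y-x)*(y-x+2*x*r)"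
    and "W^2 - r^2*x^2 > 0"
    and "(y^2-x^2)/(x^2+y^2) \<le> 2/(1-\<delta>) * (1 - r*(y^2-x^2)/(W^2 - r^2*x^2))"
proof -
  have "x*m \<le> x*(1-r)" using x0 mr by (intro mult_left_mono) auto
  hence W1: "W \<ge> y - x + x*r" using W by (simp add: algebra_simps)
  have p0: "y - x + x*r > 0" using xy x0 r0 by (simp add: add_pos_nonneg)
  have "(y - x + x*r)^2 \<le> W^2" using W1 p0 by (intro power_mono) auto
  moreover have "(y - x + x*r)^2 - r^2*x^2 = (y-x)*(y-x+2*x*r)" by (simp add: power2_eq_square algebra_simps)
  ultimately show D1: "W^2 - r^2*x^2 \<ge> (y-x)*(y-x+2*x*r)" by linarith
  have p1: "y-x+2*x*r > 0" using xy x0 r0 by (simp add: add_pos_nonneg)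
  have p2: "(y-x)*(y-x+2*x*r) > 0" using xy p1 by simp
  show D0: "W^2 - r^2*x^2 > 0" using D1 p2 by linarith
  define D where "D = W^2 - r^2*x^2"
  have "r*(y^2-x^2)/D \<le> r*(y^2-x^2)/((y-x)*(y-x+2*x*r))"
    unfolding D_def using D1 p2 r0 xy x0
    by (intro divide_left_mono mult_nonneg_nonneg) (auto simp: power_mono intro!: mult_pos_pos)
  also have "\<dots> = ((y-x)*(r*(y+x)))/((y-x)*(y-x+2*x*r))"
    by (simp add: power2_eq_square algebra_simps)
  also have "\<dots> = r*(y+x)/(y-x+2*x*r)" using xy by simp
  finally have A: "1 - r*(y^2-x^2)/D \<ge> (y-x)*(1-r)/(y-x+2*x*r)"
    using p1 by (simp add: field_simps)
  have "(y-x)*(1-r)/(y-x+2*x*r) \<ge> (y-x)*(1-r)/(y+x)"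
    using p1 xy x0 r0 rd d1 by (intro divide_left_mono mult_nonneg_nonneg mult_pos_pos) (auto simp: mult_left_le)
  with A have B: "1 - r*(y^2-x^2)/D \<ge> (y-x)*(1-r)/(y+x)" by linarith
  have pxy: "y + x > 0" using xy x0 by simp
  have C: "(y^2-x^2)/(x^2+y^2) \<le> 2*(y-x)/(y+x)"
  proof -
    have q0: "x^2+y^2 > 0" using pxy xy x0 by (simp add: add_nonneg_pos)
    have "2*(x^2+y^2) - (y+x)^2 = (y-x)^2" by (simp add: power2_eq_square algebra_simps)
    hence "(y+x)^2 \<le> 2*(x^2+y^2)" using zero_le_power2[of "y-x"] by linarith
    hence "(y-x)*(y+x)^2 \<le> (y-x)*(2*(x^2+y^2))" using xy by (intro mult_left_mono) auto
    moreover have "(y^2-x^2)*(y+x) = (y-x)*(y+x)^2" by (simp add: power2_eq_square algebra_simps)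
    moreover have "(y-x)*(2*(x^2+y^2)) = 2*(y-x)*(x^2+y^2)" by (simp add: algebra_simps)
    ultimately have "(y^2-x^2)*(y+x) \<le> 2*(y-x)*(x^2+y^2)" by linarith
    then show ?thesis using q0 pxy by (simp add: divide_simps)
  qed
  have E: "2*(y-x)/(y+x) \<le> 2/(1-\<delta>) * ((y-x)*(1-r)/(y+x))"
  proof -
    have "1 \<le> (1-r)/(1-\<delta>)" using rd d1 by simp
    hence "2*(y-x)/(y+x) * 1 \<le> 2*(y-x)/(y+x) * ((1-r)/(1-\<delta>))"
      using xy pxy by (intro mult_left_mono) auto
    thus ?thesis by (simp add: field_simps)
  qed
  have F: "2/(1-\<delta>) * ((y-x)*(1-r)/(y+x)) \<le> 2/(1-\<delta>) * (1 - r*(y^2-x^2)/D)"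
    using B d1 by (intro mult_left_mono) auto
  show "(y^2-x^2)/(x^2+y^2) \<le> 2/(1-\<delta>) * (1 - r*(y^2-x^2)/(W^2 - r^2*x^2))"
    using C E F unfolding D_def by linarith
qed

lemma quad_id:
  fixes al be ga ep c d :: complex
  shows "(cmod ep^2 - cmod ga^2) * (cmod (c*be + d*ep)^2 - cmod (c*al + d*ga)^2)
     = cmod (d * of_real(cmod ep^2 - cmod ga^2) + c*(be*cnj ep - al*cnj ga))^2 - cmod (al*ep - be*ga)^2 * cmod c^2"
proof -
  have "complex_of_real ((cmod ep^2 - cmod ga^2) * (cmod (c*be + d*ep)^2 - cmod (c*al + d*ga)^2))
     = complex_of_real (cmod (d * of_real(cmod ep^2 - cmod ga^2) + c*(be*cnj ep - al*cnj ga))^2 - cmod (al*ep - be*ga)^2 * cmod c^2)"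
    by (simp only: of_real_diff of_real_mult complex_norm_square complex_cnj_add complex_cnj_mult complex_cnj_diff complex_cnj_cnj complex_cnj_complex_of_real)
       (simp add: algebra_simps)
  then show ?thesis using of_real_eq_iff by blast
qed

lemma f_facts:
  fixes M :: mob and \<delta> :: real
  assumes "is_mobius M" "maps_disc_into_disc M" "disc_rad (mob_app M ` ball 0 1) < \<delta>"
  defines "q \<equiv> cmod (M$2$2)^2 - cmod (M$2$1)^2"
  defines "cf \<equiv> (M$1$2 * cnj (M$2$2) - M$1$1 * cnj (M$2$1)) / of_real q"
  defines "rf \<equiv> cmod (det M) / q"
  shows "det M = M$1$1 * M$2$2 - M$1$2 * M$2$1" "det M \<noteq> 0" "cmod (M$2$1) < cmod (M$2$2)"
    "q > 0" "rf > 0" "rf < \<delta>" "cmod cf + rf \<le> 1"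
proof -
  show dt: "det M = M$1$1 * M$2$2 - M$1$2 * M$2$1" by (rule det_2)
  show d0: "det M \<noteq> 0" using assms(1) unfolding is_mobius_def .
  have H: "M$2$1*z + M$2$2 \<noteq> 0 \<and> cmod ((M$1$1*z + M$1$2)/(M$2$1*z + M$2$2)) < 1" if "cmod z < 1" for z
    using assms(2) that unfolding maps_disc_into_disc_def mob_app_def by (auto simp: dist_norm)
  show cd: "cmod (M$2$1) < cmod (M$2$2)"
    by (rule disc_pole_outside[OF d0[unfolded dt] H]) auto
  show q0: "q > 0" unfolding q_def using cd by (simp add: power_strict_mono)
  have img: "mob_app M ` ball 0 1 = ball cf rf"
    unfolding mob_app_def cf_def rf_def q_def dt
    by (rule mob_image_ball[OF d0[unfolded dt] cd])
  show r0: "rf > 0" unfolding rf_def using q0 d0 by simp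
  have "disc_rad (ball cf rf) = rf"
    unfolding disc_rad_def
  proof (rule the_equality)
    show "\<exists>c. ball cf rf = ball c rf" by blast
    fix r assume "\<exists>c. ball cf rf = ball c r"
    then obtain c where "ball cf rf = ball c r" by blast
    then show "r = rf" using r0 by (auto simp: ball_eq_ball_iff)
  qed
  then show "rf < \<delta>" using assms(3) img by simp
  have "mob_app M ` ball 0 1 \<subseteq> ball 0 1"
    using assms(2) unfolding maps_disc_into_disc_def by auto
  hence "ball cf rf \<subseteq> ball 0 1" using img by simp
  hence "dist cf 0 + rf \<le> 1" using r0 by (auto simp: ball_subset_ball_iff)
  then show "cmod cf + rf \<le> 1" by (simp add: dist_norm)
qed

lemma aux_e1:
  fixes a q r D Q :: real
  assumes "q \<noteq> 0" "D \<noteq> 0" "Q \<noteq> 0"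
  shows "a*(q*r)/(q*D) = a/Q*(r*Q/D)"
  using assms by (simp add: field_simps)

lemma aux_e2:
  fixes a N Q :: real
  assumes "Q \<noteq> 0"
  shows "a/N = a/Q*(Q/N)"
  using assms by simp

lemma step_main:
  fixes c d :: complex and M :: mob and Dl \<delta> :: real
  assumes Dl: "Dl > 0" and cd: "cmod c < cmod d" and mob: "is_mobius M" and md: "maps_disc_into_disc M"
    and rad: "disc_rad (mob_app M ` ball 0 1) < \<delta>" and d1: "\<delta> < 1"
  shows "cmod (c*M$1$1 + d*M$2$1) < cmod (c*M$1$2 + d*M$2$2)"
    and "Dl/(cmod c^2 + cmod d^2) \<le> 2/(1-\<delta>) * (Dl/(cmod d^2 - cmod c^2)
          - Dl*cmod (det M)/(cmod (c*M$1$2 + d*M$2$2)^2 - cmod (c*M$1$1 + d*M$2$1)^2))"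
proof -
  define q where "q = cmod (M$2$2)^2 - cmod (M$2$1)^2"
  define cf where "cf = (M$1$2 * cnj (M$2$2) - M$1$1 * cnj (M$2$1)) / of_real q"
  define rf where "rf = cmod (det M) / q"
  note F = f_facts[OF mob md rad, folded q_def, folded cf_def rf_def]
  have q0: "q > 0" using F(4) .
  define W where "W = cmod (d + c*cf)"
  have qid: "q * (cmod (c*M$1$2 + d*M$2$2)^2 - cmod (c*M$1$1 + d*M$2$1)^2)
     = cmod (d * of_real q + c*(M$1$2 * cnj (M$2$2) - M$1$1 * cnj (M$2$1)))^2 - cmod (det M)^2 * cmod c^2"
    unfolding q_def F(1) by (rule quad_id)
  have "d * of_real q + c*(M$1$2 * cnj (M$2$2) - M$1$1 * cnj (M$2$1)) = of_real q * (d + c*cf)"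
    unfolding cf_def using q0 by (simp add: field_simps)
  hence nW: "cmod (d * of_real q + c*(M$1$2 * cnj (M$2$2) - M$1$1 * cnj (M$2$1))) = q * W"
    unfolding W_def using q0 by (simp add: norm_mult)
  moreover have "cmod (det M) = q * rf" unfolding rf_def using q0 by simp
  ultimately have "q * (cmod (c*M$1$2 + d*M$2$2)^2 - cmod (c*M$1$1 + d*M$2$1)^2) = q * (q * (W^2 - rf^2 * cmod c^2))"
  proof -
    have "q * (cmod (c*M$1$2 + d*M$2$2)^2 - cmod (c*M$1$1 + d*M$2$1)^2) = (q*W)^2 - (q*rf)^2 * cmod c^2"
      using qid \<open>cmod (det M) = q * rf\<close> nW by (simp add: power_mult_distrib)
    also have "\<dots> = q * (q * (W^2 - rf^2 * cmod c^2))" by (simp add: power2_eq_square algebra_simps)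
    finally show ?thesis .
  qed
  hence Q': "cmod (c*M$1$2 + d*M$2$2)^2 - cmod (c*M$1$1 + d*M$2$1)^2 = q * (W^2 - rf^2 * cmod c^2)"
    using q0 by simp
  have Wge: "W \<ge> cmod d - cmod c * cmod cf"
  proof -
    have "cmod d \<le> cmod (d + c*cf) + cmod (c*cf)" by (metis add_diff_cancel_right' norm_triangle_ineq4)
    thus ?thesis unfolding W_def by (simp add: norm_mult)
  qed
  note SR = step_real[where x="cmod c" and y="cmod d" and W=W and m="cmod cf" and r=rf and \<delta>=\<delta>, OF norm_ge_zero cd Wge norm_ge_zero F(7) F(5) F(6) d1]
  have Den0: "W^2 - rf^2 * cmod c^2 > 0" using SR(2) by (simp add: mult.commute)
  show "cmod (c*M$1$1 + d*M$2$1) < cmod (c*M$1$2 + d*M$2$2)"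
  proof -
    have "cmod (c*M$1$2 + d*M$2$2)^2 - cmod (c*M$1$1 + d*M$2$1)^2 > 0" using Q' q0 Den0 by simp
    hence "cmod (c*M$1$1 + d*M$2$1)^2 < cmod (c*M$1$2 + d*M$2$2)^2" by simp
    thus ?thesis using power_less_imp_less_base norm_ge_zero by blast
  qed
  have Qp: "cmod d^2 - cmod c^2 > 0" using cd by (simp add: power_strict_mono)
  have Np: "cmod c^2 + cmod d^2 > 0" using Qp by (smt (verit) zero_le_power2)
  have e1: "Dl*cmod (det M)/(cmod (c*M$1$2 + d*M$2$2)^2 - cmod (c*M$1$1 + d*M$2$1)^2)
       = Dl/(cmod d^2 - cmod c^2) * (rf*(cmod d^2 - cmod c^2)/(W^2 - rf^2 * cmod c^2))"
    unfolding Q' \<open>cmod (det M) = q * rf\<close> using q0 Qp Den0 by (intro aux_e1) auto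
  have e2: "Dl/(cmod c^2 + cmod d^2) = Dl/(cmod d^2 - cmod c^2) * ((cmod d^2 - cmod c^2)/(cmod c^2 + cmod d^2))"
    using Qp by (intro aux_e2) auto
  have "Dl/(cmod d^2 - cmod c^2) * ((cmod d^2 - cmod c^2)/(cmod c^2 + cmod d^2))
     \<le> Dl/(cmod d^2 - cmod c^2) * (2/(1-\<delta>) * (1 - rf*(cmod d^2 - cmod c^2)/(W^2 - rf^2*cmod c^2)))"
  proof (rule mult_left_mono)
    show "0 \<le> Dl/(cmod d^2 - cmod c^2)" using Dl Qp by (intro divide_nonneg_pos) auto
    show "(cmod d^2 - cmod c^2)/(cmod c^2 + cmod d^2) \<le> 2/(1-\<delta>) * (1 - rf*(cmod d^2 - cmod c^2)/(W^2 - rf^2*cmod c^2))"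
      using SR(3) by (simp add: mult.commute)
  qed
  then show "Dl/(cmod c^2 + cmod d^2) \<le> 2/(1-\<delta>) * (Dl/(cmod d^2 - cmod c^2)
          - Dl*cmod (det M)/(cmod (c*M$1$2 + d*M$2$2)^2 - cmod (c*M$1$1 + d*M$2$1)^2))"
    unfolding e1 e2 by (simp add: algebra_simps)
qed

lemma hyp_bound:
  fixes w :: complex and h :: real
  assumes h: "h > 0"
  shows "exp (- hyp_dist jpt (w,h)) \<le> 2*h"
proof -
  define X where "X = 1 + ((cmod (0 - w))\<^sup>2 + (1 - h)\<^sup>2) / (2 * 1 * h)"
  have hd: "hyp_dist jpt (w,h) = arcosh X" unfolding hyp_dist_def jpt_def X_def by simp
  have fr0: "(1 - h)\<^sup>2 / (2*h) \<le> ((cmod (0 - w))\<^sup>2 + (1 - h)\<^sup>2) / (2*h)"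
    using h by (intro divide_right_mono) auto
  have fr: "((cmod (0 - w))\<^sup>2 + (1 - h)\<^sup>2) / (2 * 1 * h) \<ge> (1 - h)\<^sup>2 / (2*h)"
    using fr0 by simp
  have "1 + (1 - h)\<^sup>2 / (2*h) = (1 + h^2)/(2*h)" using h by (simp add: field_simps power2_eq_square)
  also have "\<dots> \<ge> 1/(2*h)" using h by (intro divide_right_mono) auto
  finally have X1: "X \<ge> 1/(2*h)" using fr unfolding X_def by linarith
  have X0: "X \<ge> 1" unfolding X_def using h by simp
  have "arcosh X = ln (X + sqrt (X^2 - 1))" using X0 by (rule arcosh_real_def)
  also have "\<dots> \<ge> ln X"
  proof -
    have "X^2 \<ge> 1" using X0 by (simp add: one_le_power)
    hence "sqrt (X^2 - 1) \<ge> 0" by simp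
    hence "0 < X + sqrt (X^2 - 1)" using X0 by linarith
    thus ?thesis using X0 by simp
  qed
  finally have "exp (- arcosh X) \<le> exp (- ln X)" by simp
  also have "exp (- ln X) = 1 / X" using X0 by (simp add: exp_minus inverse_eq_divide)
  also have "\<dots> \<le> 1 / (1/(2*h))" using X1 X0 h by (intro divide_left_mono) auto
  also have "\<dots> = 2*h" by simp
  finally show ?thesis unfolding hd .
qed

lemma snd_pe: "snd (poincare_ext G jpt) = cmod (det G)/(cmod (G$2$1)^2 + cmod (G$2$2)^2)"
  by (simp add: poincare_ext_def jpt_def Let_def add.commute)

lemma comp_prod_row:
  "comp_prod f (Suc n) $2$1 = comp_prod f n $2$1 * f (Suc n) $1$1 + comp_prod f n $2$2 * f (Suc n) $2$1"
  "comp_prod f (Suc n) $2$2 = comp_prod f n $2$1 * f (Suc n) $1$2 + comp_prod f n $2$2 * f (Suc n) $2$2"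
  "det (comp_prod f (Suc n)) = det (comp_prod f n) * det (f (Suc n))"
  by (simp_all only: comp_prod.simps(2) det_mul) (simp_all add: matrix_matrix_mult_def sum_2)

theorem theorem1p5:
  fixes \<delta> :: real and f :: "nat \<Rightarrow> mob"
  assumes "0 < \<delta>" and "\<delta> < 1"
    and "\<And>n. n \<ge> 1 \<Longrightarrow> is_mobius (f n)"
    and "\<And>n. n \<ge> 1 \<Longrightarrow> maps_disc_into_disc (f n)"
    and "\<And>n. n \<ge> 1 \<Longrightarrow> disc_rad (mob_app (f n) ` ball 0 1) < \<delta>"
  shows "rapid_escape (\<lambda>n. comp_prod f (Suc n))"
proof -
  define cc where "cc n = comp_prod f n $2$1" for n
  define dd where "dd n = comp_prod f n $2$2" for n
  define Dl where "Dl n = cmod (det (comp_prod f n))" for n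
  define R where "R n = Dl n / (cmod (dd n)^2 - cmod (cc n)^2)" for n
  define T where "T n = Dl n / (cmod (cc n)^2 + cmod (dd n)^2)" for n
  define C where "C = 2/(1-\<delta>)"
  have inv: "Dl n > 0 \<and> cmod (cc n) < cmod (dd n)" for n
  proof (induction n)
    case 0 then show ?case unfolding Dl_def cc_def dd_def comp_prod.simps(1) det_I by (simp add: mat_def)
  next
    case (Suc n)
    have s1: "Suc n \<ge> 1" by simp
    note SM = step_main[of "Dl n" "cc n" "dd n" "f (Suc n)" \<delta>, OF conjunct1[OF Suc.IH] conjunct2[OF Suc.IH]
        assms(3)[OF s1] assms(4)[OF s1] assms(5)[OF s1] assms(2)]
    have "det (f (Suc n)) \<noteq> 0" using assms(3)[OF s1] unfolding is_mobius_def .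
    hence "Dl (Suc n) > 0" using Suc.IH unfolding Dl_def comp_prod_row by (simp add: norm_mult)
    moreover have "cmod (cc (Suc n)) < cmod (dd (Suc n))"
      using SM(1) unfolding cc_def dd_def comp_prod_row by (simp add: mult.commute)
    ultimately show ?case by simp
  qed
  have Rstep: "T n \<le> C * (R n - R (Suc n))" for n
  proof -
    have s1: "Suc n \<ge> 1" by simp
    note SM = step_main[of "Dl n" "cc n" "dd n" "f (Suc n)" \<delta>, OF conjunct1[OF inv] conjunct2[OF inv]
        assms(3)[OF s1] assms(4)[OF s1] assms(5)[OF s1] assms(2)]
    have "R (Suc n) = Dl n * cmod (det (f (Suc n))) /
       (cmod (cc n * f (Suc n) $1$2 + dd n * f (Suc n) $2$2)^2 - cmod (cc n * f (Suc n) $1$1 + dd n * f (Suc n) $2$1)^2)"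
      unfolding R_def Dl_def cc_def dd_def comp_prod_row by (simp add: norm_mult)
    then show ?thesis using SM(2) unfolding T_def R_def C_def by simp
  qed
  have R0: "R n > 0" for n
  proof -
    have "cmod (cc n)^2 < cmod (dd n)^2" using inv[of n] by (simp add: power_strict_mono)
    thus ?thesis unfolding R_def using inv[of n] by simp
  qed
  have T0: "T n \<ge> 0" for n unfolding T_def Dl_def by simp
  have C0: "C > 0" unfolding C_def using assms(2) by simp
  have "(\<Sum>k\<le>n. T k) \<le> C * R 0" for n
  proof -
    have "(\<Sum>k\<le>n. T k) \<le> (\<Sum>k<Suc n. C * (R k - R (Suc k)))"
      using Rstep by (simp add: lessThan_Suc_atMost sum_mono)
    also have "\<dots> = C * (R 0 - R (Suc n))" by (simp add: sum_distrib_left[symmetric] sum_lessThan_telescope')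
    also have "\<dots> \<le> C * R 0" using C0 R0[of "Suc n"] by simp
    finally show ?thesis .
  qed
  hence sT: "summable T" using T0 by (intro bounded_imp_summable) auto
  have sT1: "summable (\<lambda>n. T (Suc n))" using sT by (simp add: summable_Suc_iff)
  define hd where "hd n = hyp_dist jpt (poincare_ext (comp_prod f (Suc n)) jpt)" for n
  have Tpos: "T n > 0" for n
  proof -
    have "cmod (cc n)^2 + cmod (dd n)^2 > 0" using inv[of n]
      by (smt (verit) norm_ge_zero zero_le_power2 power_strict_mono zero_less_power)
    thus ?thesis unfolding T_def using inv[of n] by simp
  qed
  have hb: "exp (- hd n) \<le> 2 * T (Suc n)" for n
  proof -
    have "snd (poincare_ext (comp_prod f (Suc n)) jpt) = T (Suc n)"
      unfolding snd_pe T_def Dl_def cc_def dd_def ..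
    hence "poincare_ext (comp_prod f (Suc n)) jpt = (fst (poincare_ext (comp_prod f (Suc n)) jpt), T (Suc n))"
      by (metis prod.collapse)
    then show ?thesis unfolding hd_def using hyp_bound[OF Tpos[of "Suc n"]] by metis
  qed
  have sum_e: "summable (\<lambda>n. exp (- hd n))"
    by (rule summable_comparison_test[of _ "\<lambda>n. 2 * T (Suc n)"]) (use hb sT1 in \<open>auto intro: summable_mult\<close>)
  have lim0: "(\<lambda>n. exp (- hd n)) \<longlonglongrightarrow> 0" using summable_LIMSEQ_zero[OF sum_e] .
  have esc: "filterlim hd at_top sequentially"
  proof (subst filterlim_at_top, intro allI)
    fix Z :: real
    have "eventually (\<lambda>n. exp (- hd n) < exp (- Z)) sequentially"
      using order_tendstoD(2)[OF lim0, of "exp (- Z)"] by simp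
    then show "eventually (\<lambda>n. Z \<le> hd n) sequentially"
      by (rule eventually_mono) simp
  qed
  show ?thesis unfolding rapid_escape_def escaping_def using esc sum_e unfolding hd_def by simp
qed

end
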